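(* For $n\geq 3$, the groups $H_n$ and $VP_n$ are not isomorphic.
   Context: The virtual braid group $VB_n$ is the group with generators $\sigma_i,\rho_i$ ($i=1,\dots,n-1$) and defining relations: $\sigma_i\sigma_{i+1}\sigma_i=\sigma_{i+1}\sigma_i\sigma_{i+1}$ ($1\le i\le n-2$); $\sigma_i\sigma_j=\sigma_j\sigma_i$ ($|i-j|\geq 2$); $\rho_i\rho_{i+1}\rho_i=\rho_{i+1}\rho_i\rho_{i+1}$ ($1\le i\le n-2$); $\rho_i\rho_j=\rho_j\rho_i$ ($|i-j|\geq 2$); $\rho_i^2=1$; $\sigma_i\rho_j=\rho_j\sigma_i$ ($|i-j|\geq2$); $\rho_i\rho_{i+1}\sigma_i=\sigma_{i+1}\rho_i\rho_{i+1}$ ($1\le i\le n-2$). $H_n$ is the kernel of $\mu:VB_n\to S_n$, $\mu(\sigma_i)=1$, $\mu(\rho_i)=(i\ i{+}1)$ (equivalently, the normal closure of $\langle\sigma_1,\dots,\sigma_{n-1}\rangle$). $VP_n$ is the kernel of $\nu:VB_n\to S_n$, $\nu(\sigma_i)=\nu(\rho_i)=(i\ i{+}1)$. *)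

theory Defs
  imports "HOL-Algebra.Group" "HOL-Algebra.Coset"
begin

text \<open>Generators of the virtual braid group: Sig i = sigma_i, Rho i = rho_i (1 \<le> i \<le> n-1).
 A letter is a pair (b, g); b = True means the inverse of g.\<close>

datatype gen = Sig nat | Rho nat

type_synonym letter = "bool \<times> gen"
type_synonym word = "letter list"

fun gidx :: "gen \<Rightarrow> nat" where
  "gidx (Sig i) = i" | "gidx (Rho i) = i"

definition letters :: "nat \<Rightarrow> letter set" where
  "letters n = {(b, g). 1 \<le> gidx g \<and> gidx g \<le> n - 1}"

definition linv :: "letter \<Rightarrow> letter" where
  "linv x = (\<not> fst x, snd x)"

abbreviation s :: "nat \<Rightarrow> letter" where "s i \<equiv> (False, Sig i)"
abbreviation r :: "nat \<Rightarrow> letter" where "r i \<equiv> (False, Rho i)"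

definition vb_relations :: "nat \<Rightarrow> (word \<times> word) set" where
  "vb_relations n =
     {([s i, s (i+1), s i], [s (i+1), s i, s (i+1)]) | i. 1 \<le> i \<and> i \<le> n - 2}
   \<union> {([s i, s j], [s j, s i]) | i j. 1 \<le> i \<and> i \<le> n - 1 \<and> 1 \<le> j \<and> j \<le> n - 1
          \<and> (i + 2 \<le> j \<or> j + 2 \<le> i)}
   \<union> {([r i, r (i+1), r i], [r (i+1), r i, r (i+1)]) | i. 1 \<le> i \<and> i \<le> n - 2}
   \<union> {([r i, r j], [r j, r i]) | i j. 1 \<le> i \<and> i \<le> n - 1 \<and> 1 \<le> j \<and> j \<le> n - 1
          \<and> (i + 2 \<le> j \<or> j + 2 \<le> i)}
   \<union> {([r i, r i], []) | i. 1 \<le> i \<and> i \<le> n - 1}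
   \<union> {([s i, r j], [r j, s i]) | i j. 1 \<le> i \<and> i \<le> n - 1 \<and> 1 \<le> j \<and> j \<le> n - 1
          \<and> (i + 2 \<le> j \<or> j + 2 \<le> i)}
   \<union> {([r i, r (i+1), s i], [s (i+1), r i, r (i+1)]) | i. 1 \<le> i \<and> i \<le> n - 2}"

inductive vb_eqv :: "nat \<Rightarrow> word \<Rightarrow> word \<Rightarrow> bool" for n where
  refl: "w \<in> lists (letters n) \<Longrightarrow> vb_eqv n w w"
| sym: "vb_eqv n u v \<Longrightarrow> vb_eqv n v u"
| trans: "vb_eqv n u v \<Longrightarrow> vb_eqv n v w \<Longrightarrow> vb_eqv n u w"
| cancel: "u \<in> lists (letters n) \<Longrightarrow> v \<in> lists (letters n) \<Longrightarrow> x \<in> letters n \<Longrightarrow>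
           vb_eqv n (u @ [x, linv x] @ v) (u @ v)"
| rel: "(lhs, rhs) \<in> vb_relations n \<Longrightarrow> u \<in> lists (letters n) \<Longrightarrow> v \<in> lists (letters n) \<Longrightarrow>
           vb_eqv n (u @ lhs @ v) (u @ rhs @ v)"

definition vb_rel :: "nat \<Rightarrow> (word \<times> word) set" where
  "vb_rel n = {(u, v). vb_eqv n u v}"

definition VB :: "nat \<Rightarrow> word set monoid" where
  "VB n = \<lparr> carrier = lists (letters n) // vb_rel n,
            mult = (\<lambda>X Y. vb_rel n `` {(SOME x. x \<in> X) @ (SOME y. y \<in> Y)}),
            one = vb_rel n `` {[]} \<rparr>"

definition adj :: "nat \<Rightarrow> nat \<Rightarrow> nat" where
  "adj i = (\<lambda>k. if k = i then Suc i else if k = Suc i then i else k)"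

text \<open>mu(sigma_i) = 1, mu(rho_i) = (i i+1); nu(sigma_i) = nu(rho_i) = (i i+1).
 Transpositions are involutions, so inverse letters map to the same permutation.\<close>
fun mu_letter :: "letter \<Rightarrow> nat \<Rightarrow> nat" where
  "mu_letter (b, Sig i) = id"
| "mu_letter (b, Rho i) = adj i"

fun nu_letter :: "letter \<Rightarrow> nat \<Rightarrow> nat" where
  "nu_letter (b, g) = adj (gidx g)"

definition mu_word :: "word \<Rightarrow> nat \<Rightarrow> nat" where
  "mu_word w = foldr (\<lambda>x f. mu_letter x \<circ> f) w id"

definition nu_word :: "word \<Rightarrow> nat \<Rightarrow> nat" where
  "nu_word w = foldr (\<lambda>x f. nu_letter x \<circ> f) w id"

definition H :: "nat \<Rightarrow> word set set" where
  "H n = {X \<in> carrier (VB n). \<forall>w \<in> X. mu_word w = id}"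

definition VP :: "nat \<Rightarrow> word set set" where
  "VP n = {X \<in> carrier (VB n). \<forall>w \<in> X. nu_word w = id}"

end

theory Submission
  imports Defs
begin



lemma eqv_lists: "vb_eqv n u v \<Longrightarrow> u \<in> lists (letters n) \<and> v \<in> lists (letters n)"
  by (induction rule: vb_eqv.induct) (auto simp: vb_relations_def letters_def linv_def)

lemma eqv_ctx_l: "vb_eqv n u v \<Longrightarrow> w \<in> lists (letters n) \<Longrightarrow> vb_eqv n (w @ u) (w @ v)"
proof (induction rule: vb_eqv.induct)
  case (refl w') then show ?case by (intro vb_eqv.refl) auto
next
  case (sym u v) then show ?case by (auto intro: vb_eqv.sym)
next
  case (trans u v w') then show ?case by (auto intro: vb_eqv.trans)
next
  case (cancel u v x) then show ?case using vb_eqv.cancel[of "w@u" n v x] by auto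
next
  case (rel lhs rhs u v) then show ?case using vb_eqv.rel[of lhs rhs n "w@u" v] by auto
qed

lemma eqv_ctx_r: "vb_eqv n u v \<Longrightarrow> w \<in> lists (letters n) \<Longrightarrow> vb_eqv n (u @ w) (v @ w)"
proof (induction rule: vb_eqv.induct)
  case (refl w') then show ?case by (intro vb_eqv.refl) auto
next
  case (sym u v) then show ?case by (auto intro: vb_eqv.sym)
next
  case (trans u v w') then show ?case by (auto intro: vb_eqv.trans)
next
  case (cancel u v x) then show ?case using vb_eqv.cancel[of u n "v@w" x] by auto
next
  case (rel lhs rhs u v) then show ?case using vb_eqv.rel[of lhs rhs n u "v@w"] by auto
qed

lemma eqv_app: "vb_eqv n u u' \<Longrightarrow> vb_eqv n v v' \<Longrightarrow> vb_eqv n (u @ v) (u' @ v')"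
  by (meson eqv_ctx_l eqv_ctx_r eqv_lists vb_eqv.trans)

lemma eqv_refl: "w \<in> lists (letters n) \<Longrightarrow> vb_eqv n w w" by (rule vb_eqv.refl)

lemma eqv_rel0: "(l, r') \<in> vb_relations n \<Longrightarrow> vb_eqv n l r'"
  using vb_eqv.rel[of l r' n "[]" "[]"] by simp

lemma eqv_cancel0: "x \<in> letters n \<Longrightarrow> vb_eqv n [x, linv x] []"
  using vb_eqv.cancel[of "[]" n "[]" x] by simp



lemma nu_word_simps[simp]: "nu_word [] = id" "nu_word (x # w) = nu_letter x \<circ> nu_word w"
  by (auto simp: nu_word_def)
lemma mu_word_simps[simp]: "mu_word [] = id" "mu_word (x # w) = mu_letter x \<circ> mu_word w"
  by (auto simp: mu_word_def)
lemma nu_word_app[simp]: "nu_word (u @ v) = nu_word u \<circ> nu_word v"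
  by (induction u) auto
lemma mu_word_app[simp]: "mu_word (u @ v) = mu_word u \<circ> mu_word v"
  by (induction u) auto

fun contrib :: "(nat \<Rightarrow> nat) \<Rightarrow> letter \<Rightarrow> nat \<times> nat \<Rightarrow> bool" where
  "contrib \<pi> (b, Sig i) = (\<lambda>p. p = (if b then (\<pi> (Suc i), \<pi> i) else (\<pi> i, \<pi> (Suc i))))"
| "contrib \<pi> (b, Rho i) = (\<lambda>p. False)"

fun cc :: "(nat \<Rightarrow> nat) \<Rightarrow> word \<Rightarrow> nat \<times> nat \<Rightarrow> bool" where
  "cc \<pi> [] = (\<lambda>p. False)"
| "cc \<pi> (x # w) = (\<lambda>p. contrib \<pi> x p \<noteq> cc (\<pi> \<circ> nu_letter x) w p)"

lemma cc_app: "cc \<pi> (u @ v) = (\<lambda>p. cc \<pi> u p \<noteq> cc (\<pi> \<circ> nu_word u) v p)"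
  by (induction u arbitrary: \<pi>) (auto simp: fun_eq_iff comp_assoc)

lemma adj_apply[simp]: "adj i i = Suc i" "adj i (Suc i) = i"
  "k \<noteq> i \<Longrightarrow> k \<noteq> Suc i \<Longrightarrow> adj i k = k"
  by (auto simp: adj_def)

lemma adj_invol[simp]: "adj i \<circ> adj i = id"
  by (auto simp: adj_def fun_eq_iff)

lemma rel_facts:
  assumes "(l, r') \<in> vb_relations n"
  shows "nu_word l = nu_word r' \<and> mu_word l = mu_word r' \<and> cc \<pi> l = cc \<pi> r'"
  using assms unfolding vb_relations_def
  by (auto simp: adj_def fun_eq_iff)

lemma cancel_facts:
  "nu_word [x, linv x] = id \<and> mu_word [x, linv x] = id \<and> cc \<pi> [x, linv x] = (\<lambda>p. False)"
  by (cases x; case_tac b; auto simp: linv_def fun_eq_iff)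



lemma nu_letter_linv[simp]: "nu_letter (linv x) = nu_letter x"
  by (cases x) (auto simp: linv_def)
lemma mu_letter_linv[simp]: "mu_letter (linv x) = mu_letter x"
  by (cases x, rename_tac b g, case_tac g) (auto simp: linv_def)
lemma nu_letter_invol[simp]: "nu_letter x \<circ> nu_letter x = id"
  by (cases x) auto
lemma mu_letter_invol[simp]: "mu_letter x \<circ> mu_letter x = id"
  by (cases x, rename_tac b g, case_tac g) auto

lemma eqv_invariants:
  "vb_eqv n u v \<Longrightarrow> nu_word u = nu_word v \<and> mu_word u = mu_word v \<and> (\<forall>\<pi>. cc \<pi> u = cc \<pi> v)"
proof (induction rule: vb_eqv.induct)
  case (cancel u v x)
  have a: "nu_word ([x, linv x] @ v) = nu_word v" "mu_word ([x, linv x] @ v) = mu_word v"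
    using cancel_facts[of x] by (simp_all only: nu_word_app mu_word_app) simp_all
  have b: "cc \<pi> ([x, linv x] @ v) = cc \<pi> v" for \<pi>
    using cancel_facts[of x \<pi>] unfolding cc_app by (simp add: fun_eq_iff)
  show ?case using a b by (simp only: nu_word_app mu_word_app cc_app) simp
next
  case (rel lhs rhs u v)
  have a: "nu_word (lhs @ v) = nu_word (rhs @ v)" "mu_word (lhs @ v) = mu_word (rhs @ v)"
    using rel_facts[OF rel(1)] by simp_all
  have b: "cc \<pi> (lhs @ v) = cc \<pi> (rhs @ v)" for \<pi>
    using rel_facts[OF rel(1), of \<pi>] rel_facts[OF rel(1), of id] unfolding cc_app by simp
  show ?case using a b by (simp only: nu_word_app mu_word_app cc_app) simp
qed auto

definition cls :: "nat \<Rightarrow> word \<Rightarrow> word set" where "cls n w = vb_rel n `` {w}"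

lemma mem_cls[simp]: "v \<in> cls n w \<longleftrightarrow> vb_eqv n w v"
  by (simp add: cls_def vb_rel_def)

lemma cls_eq_iff: "u \<in> lists (letters n) \<Longrightarrow> cls n u = cls n v \<longleftrightarrow> vb_eqv n u v"
proof
  assume uL: "u \<in> lists (letters n)" and "cls n u = cls n v"
  have "u \<in> cls n u" using vb_eqv.refl[OF uL] by simp
  then have "u \<in> cls n v" using \<open>cls n u = cls n v\<close> by simp
  then have "vb_eqv n v u" by simp
  then show "vb_eqv n u v" by (rule vb_eqv.sym)
next
  assume uv: "vb_eqv n u v"
  show "cls n u = cls n v"
    using vb_eqv.trans[OF vb_eqv.sym[OF uv]] vb_eqv.trans[OF uv] by (auto simp: set_eq_iff)
qed

lemma carrier_VB: "carrier (VB n) = {cls n w | w. w \<in> lists (letters n)}"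
  by (auto simp: VB_def quotient_def cls_def)

lemma some_cls: "w \<in> lists (letters n) \<Longrightarrow> vb_eqv n w (SOME x. x \<in> cls n w)"
  by (metis mem_cls someI_ex vb_eqv.refl)

lemma mult_cls: "u \<in> lists (letters n) \<Longrightarrow> v \<in> lists (letters n) \<Longrightarrow>
   mult (VB n) (cls n u) (cls n v) = cls n (u @ v)"
proof -
  assume u: "u \<in> lists (letters n)" and v: "v \<in> lists (letters n)"
  have "vb_eqv n (u @ v) ((SOME x. x \<in> cls n u) @ (SOME x. x \<in> cls n v))"
    by (rule eqv_app[OF some_cls[OF u] some_cls[OF v]])
  then have "cls n ((SOME x. x \<in> cls n u) @ (SOME x. x \<in> cls n v)) = cls n (u @ v)"
    using u v by (metis append_in_lists_conv cls_eq_iff vb_eqv.sym)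
  then show ?thesis unfolding VB_def by (simp add: cls_def[symmetric])
qed

lemma H_cls: assumes w: "w \<in> lists (letters n)" shows "cls n w \<in> H n \<longleftrightarrow> mu_word w = id"
proof
  assume "cls n w \<in> H n" then have "\<forall>x\<in>cls n w. mu_word x = id" unfolding H_def by blast
  moreover have "w \<in> cls n w" using vb_eqv.refl[OF w] by simp
  ultimately show "mu_word w = id" by blast
next
  assume m: "mu_word w = id"
  have "cls n w \<in> carrier (VB n)" using w unfolding carrier_VB by blast
  moreover have "\<forall>x\<in>cls n w. mu_word x = id" using m eqv_invariants by (metis mem_cls)
  ultimately show "cls n w \<in> H n" unfolding H_def by blast
qed

lemma VP_cls: assumes w: "w \<in> lists (letters n)" shows "cls n w \<in> VP n \<longleftrightarrow> nu_word w = id"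
proof
  assume "cls n w \<in> VP n" then have "\<forall>x\<in>cls n w. nu_word x = id" unfolding VP_def by blast
  moreover have "w \<in> cls n w" using vb_eqv.refl[OF w] by simp
  ultimately show "nu_word w = id" by blast
next
  assume m: "nu_word w = id"
  have "cls n w \<in> carrier (VB n)" using w unfolding carrier_VB by blast
  moreover have "\<forall>x\<in>cls n w. nu_word x = id" using m eqv_invariants by (metis mem_cls)
  ultimately show "cls n w \<in> VP n" unfolding VP_def by blast
qed

lemma H_elem: "X \<in> H n \<Longrightarrow> \<exists>w \<in> lists (letters n). X = cls n w \<and> mu_word w = id"
proof -
  assume a: "X \<in> H n"
  then have "X \<in> carrier (VB n)" by (simp add: H_def)
  then obtain w where w: "w \<in> lists (letters n)" "X = cls n w"
    unfolding carrier_VB by blast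
  from a w(2) have "cls n w \<in> H n" by simp
  then have "mu_word w = id" using H_cls[OF w(1)] by simp
  then show ?thesis using w by blast
qed

lemma VP_elem: "X \<in> VP n \<Longrightarrow> \<exists>w \<in> lists (letters n). X = cls n w \<and> nu_word w = id"
proof -
  assume a: "X \<in> VP n"
  then have "X \<in> carrier (VB n)" by (simp add: VP_def)
  then obtain w where w: "w \<in> lists (letters n)" "X = cls n w"
    unfolding carrier_VB by blast
  from a w(2) have "cls n w \<in> VP n" by simp
  then have "nu_word w = id" using VP_cls[OF w(1)] by simp
  then show ?thesis using w by blast
qed

definition CC :: "word set \<Rightarrow> nat \<times> nat \<Rightarrow> bool" where "CC X = cc id (SOME x. x \<in> X)"

lemma CC_cls: "w \<in> lists (letters n) \<Longrightarrow> CC (cls n w) = cc id w"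
  unfolding CC_def using eqv_invariants[OF some_cls[of w n]] by simp

lemma cc_hom: "nu_word u = id \<Longrightarrow> cc id (u @ v) = (\<lambda>p. cc id u p \<noteq> cc id v p)"
  by (simp add: cc_app)



definition winv :: "word \<Rightarrow> word" where "winv w = rev (map linv w)"

lemma linv_linv[simp]: "linv (linv x) = x" by (simp add: linv_def)
lemma linv_letters[simp]: "linv x \<in> letters n \<longleftrightarrow> x \<in> letters n"
  by (auto simp: linv_def letters_def)
lemma winv_simps[simp]: "winv [] = []" "winv (x # w) = winv w @ [linv x]"
  "winv (u @ v) = winv v @ winv u" "winv (winv w) = w"
  by (auto simp: winv_def rev_map comp_def)
lemma winv_lists[simp]: "winv w \<in> lists (letters n) \<longleftrightarrow> w \<in> lists (letters n)"
  by (auto simp: winv_def)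

lemma eqv_trans3: "vb_eqv n a b \<Longrightarrow> vb_eqv n b c \<Longrightarrow> vb_eqv n a c" by (rule vb_eqv.trans)

lemma w_winv: "w \<in> lists (letters n) \<Longrightarrow> vb_eqv n (w @ winv w) []"
proof (induction w)
  case Nil then show ?case using vb_eqv.refl[of "[]" n] by simp
next
  case (Cons x w)
  then have x: "x \<in> letters n" and w: "w \<in> lists (letters n)" by auto
  have "vb_eqv n ([x] @ (w @ winv w) @ [linv x]) ([x] @ [] @ [linv x])"
    using eqv_app[OF eqv_app[OF vb_eqv.refl Cons.IH[OF w]] vb_eqv.refl, of "[x]" "[linv x]"] x
    by simp
  moreover have "vb_eqv n [x, linv x] []" using eqv_cancel0[OF x] .
  ultimately show ?case by (auto intro: vb_eqv.trans)
qed

lemma winv_w: "w \<in> lists (letters n) \<Longrightarrow> vb_eqv n (winv w @ w) []"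
  using w_winv[of "winv w" n] by simp

lemma mu_winv: "w \<in> lists (letters n) \<Longrightarrow> mu_word w \<circ> mu_word (winv w) = id"
  using eqv_invariants[OF w_winv[of w n]] by simp

definition Hw :: "nat \<Rightarrow> word set" where
  "Hw n = {w \<in> lists (letters n). mu_word w = id}"

definition cj :: "word \<Rightarrow> word \<Rightarrow> word" where "cj p a = p @ a @ winv p"

lemma cj_Hw: "p \<in> lists (letters n) \<Longrightarrow> a \<in> Hw n \<Longrightarrow> cj p a \<in> Hw n"
  using mu_winv[of p n] by (auto simp: Hw_def cj_def comp_assoc)

lemma cj_nil[simp]: "cj [] a = a" by (simp add: cj_def)
lemma cj_cj: "cj q (cj p a) = cj (q @ p) a" by (simp add: cj_def)

lemma cj_app: "q \<in> lists (letters n) \<Longrightarrow> a \<in> lists (letters n) \<Longrightarrow> b \<in> lists (letters n) \<Longrightarrow>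
   vb_eqv n (cj q a @ cj q b) (cj q (a @ b))"
proof -
  assume q: "q \<in> lists (letters n)" and a: "a \<in> lists (letters n)" and b: "b \<in> lists (letters n)"
  have qa: "q @ a \<in> lists (letters n)" and bq: "b @ winv q \<in> lists (letters n)" using q a b by auto
  have "vb_eqv n ((q @ a) @ (winv q @ q) @ (b @ winv q)) ((q @ a) @ [] @ (b @ winv q))"
    by (rule eqv_app[OF vb_eqv.refl[OF qa] eqv_app[OF winv_w[OF q] vb_eqv.refl[OF bq]]])
  then show ?thesis by (simp add: cj_def)
qed

lemma eqv_cj: "vb_eqv n a b \<Longrightarrow> q \<in> lists (letters n) \<Longrightarrow> vb_eqv n (cj q a) (cj q b)"
  unfolding cj_def by (rule eqv_app[OF vb_eqv.refl eqv_app[OF _ vb_eqv.refl]]) auto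

definition psi_ok :: "nat \<Rightarrow> (word \<Rightarrow> nat \<times> nat \<Rightarrow> bool) \<Rightarrow> bool" where
  "psi_ok n \<Psi> \<longleftrightarrow> (\<forall>u \<in> Hw n. \<forall>v \<in> Hw n. \<Psi> (u @ v) = (\<lambda>p. \<Psi> u p \<noteq> \<Psi> v p))
     \<and> (\<forall>u v. u \<in> Hw n \<longrightarrow> vb_eqv n u v \<longrightarrow> \<Psi> u = \<Psi> v)"

lemma psi_add: "psi_ok n \<Psi> \<Longrightarrow> u \<in> Hw n \<Longrightarrow> v \<in> Hw n \<Longrightarrow> \<Psi> (u @ v) = (\<lambda>p. \<Psi> u p \<noteq> \<Psi> v p)"
  by (simp add: psi_ok_def)
lemma psi_resp: "psi_ok n \<Psi> \<Longrightarrow> u \<in> Hw n \<Longrightarrow> vb_eqv n u v \<Longrightarrow> \<Psi> u = \<Psi> v"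
  by (simp add: psi_ok_def)
lemma Hw_nil[simp]: "[] \<in> Hw n" by (simp add: Hw_def)
lemma Hw_app: "u \<in> Hw n \<Longrightarrow> v \<in> Hw n \<Longrightarrow> u @ v \<in> Hw n" by (simp add: Hw_def)
lemma psi_nil: "psi_ok n \<Psi> \<Longrightarrow> \<Psi> [] = (\<lambda>p. False)"
  using psi_add[of n \<Psi> "[]" "[]"] by (auto simp: fun_eq_iff)

definition sim :: "nat \<Rightarrow> (word \<Rightarrow> nat \<times> nat \<Rightarrow> bool) \<Rightarrow> word \<Rightarrow> word \<Rightarrow> bool" where
  "sim n \<Psi> a b \<longleftrightarrow> a \<in> Hw n \<and> b \<in> Hw n \<and> (\<forall>q \<in> lists (letters n). \<Psi> (cj q a) = \<Psi> (cj q b))"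

lemma sim_sym: "sim n \<Psi> a b \<Longrightarrow> sim n \<Psi> b a" by (auto simp: sim_def)
lemma sim_trans: "sim n \<Psi> a b \<Longrightarrow> sim n \<Psi> b c \<Longrightarrow> sim n \<Psi> a c" by (auto simp: sim_def)
lemma sim_refl: "a \<in> Hw n \<Longrightarrow> sim n \<Psi> a a" by (auto simp: sim_def)
lemma sim_cj: "sim n \<Psi> a b \<Longrightarrow> p \<in> lists (letters n) \<Longrightarrow> sim n \<Psi> (cj p a) (cj p b)"
  by (auto simp: sim_def cj_cj cj_Hw)
lemma sim_psi: "sim n \<Psi> a b \<Longrightarrow> \<Psi> a = \<Psi> b"
  unfolding sim_def using cj_nil by (metis lists.Nil)

lemma Hw_eqv: "a \<in> Hw n \<Longrightarrow> vb_eqv n a b \<Longrightarrow> b \<in> Hw n"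
  using eqv_invariants eqv_lists by (fastforce simp: Hw_def)

lemma sim_eqv: "psi_ok n \<Psi> \<Longrightarrow> a \<in> Hw n \<Longrightarrow> vb_eqv n a b \<Longrightarrow> sim n \<Psi> a b"
  unfolding sim_def using Hw_eqv eqv_cj psi_resp cj_Hw by metis

lemma sim_braid:
  assumes ok: "psi_ok n \<Psi>" and a: "a \<in> Hw n" and b: "b \<in> Hw n"
    and br: "vb_eqv n (a @ b @ a) (b @ a @ b)"
  shows "sim n \<Psi> a b"
  unfolding sim_def
proof (intro conjI ballI a b)
  fix q assume q: "q \<in> lists (letters n)"
  have aL: "a \<in> lists (letters n)" and bL: "b \<in> lists (letters n)" using a b by (auto simp: Hw_def)
  have qa: "cj q a \<in> Hw n" and qb: "cj q b \<in> Hw n" using cj_Hw q a b by auto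
  have e1: "vb_eqv n (cj q a @ cj q b @ cj q a) (cj q (a @ b @ a))"
    by (rule eqv_trans3[OF eqv_app[OF vb_eqv.refl cj_app] cj_app]) (use q aL bL qa qb in \<open>auto simp: Hw_def\<close>)
  have e2: "vb_eqv n (cj q b @ cj q a @ cj q b) (cj q (b @ a @ b))"
    by (rule eqv_trans3[OF eqv_app[OF vb_eqv.refl cj_app] cj_app]) (use q aL bL qa qb in \<open>auto simp: Hw_def\<close>)
  have e3: "vb_eqv n (cj q (a @ b @ a)) (cj q (b @ a @ b))" using eqv_cj[OF br q] .
  have "vb_eqv n (cj q a @ cj q b @ cj q a) (cj q b @ cj q a @ cj q b)"
    using e1 e2 e3 by (meson vb_eqv.sym vb_eqv.trans)
  then have "\<Psi> (cj q a @ cj q b @ cj q a) = \<Psi> (cj q b @ cj q a @ cj q b)"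
    using psi_resp[OF ok] qa qb Hw_app by blast
  then show "\<Psi> (cj q a) = \<Psi> (cj q b)"
    using psi_add[OF ok] qa qb Hw_app by (simp add: fun_eq_iff) metis
qed



lemmas [trans] = vb_eqv.trans

lemma letters_iff[simp]: "(b, g) \<in> letters n \<longleftrightarrow> 1 \<le> gidx g \<and> gidx g \<le> n - 1"
  by (simp add: letters_def)
lemma linv_pair[simp]: "linv (b, g) = (\<not> b, g)" by (simp add: linv_def)

lemma ctx: "vb_eqv n a b \<Longrightarrow> u \<in> lists (letters n) \<Longrightarrow> v \<in> lists (letters n) \<Longrightarrow>
    vb_eqv n (u @ a @ v) (u @ b @ v)"
  by (rule eqv_app[OF vb_eqv.refl eqv_app[OF _ vb_eqv.refl]])

lemma ctxI: "vb_eqv n a b \<Longrightarrow> u \<in> lists (letters n) \<Longrightarrow> v \<in> lists (letters n) \<Longrightarrow>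
    x = u @ a @ v \<Longrightarrow> y = u @ b @ v \<Longrightarrow> vb_eqv n x y"
  using ctx by blast

lemma R_braid_s: "1 \<le> i \<Longrightarrow> i \<le> n - 2 \<Longrightarrow> vb_eqv n [s i, s (i+1), s i] [s (i+1), s i, s (i+1)]"
  by (rule eqv_rel0) (auto simp: vb_relations_def)
lemma R_braid_r: "1 \<le> i \<Longrightarrow> i \<le> n - 2 \<Longrightarrow> vb_eqv n [r i, r (i+1), r i] [r (i+1), r i, r (i+1)]"
  by (rule eqv_rel0) (auto simp: vb_relations_def)
lemma R_comm_r: "1 \<le> i \<Longrightarrow> i \<le> n - 1 \<Longrightarrow> 1 \<le> j \<Longrightarrow> j \<le> n - 1 \<Longrightarrow> i + 2 \<le> j \<or> j + 2 \<le> i \<Longrightarrow>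
   vb_eqv n [r i, r j] [r j, r i]"
  by (rule eqv_rel0) (auto simp: vb_relations_def)
lemma R_rr: "1 \<le> i \<Longrightarrow> i \<le> n - 1 \<Longrightarrow> vb_eqv n [r i, r i] []"
  by (rule eqv_rel0) (auto simp: vb_relations_def)
lemma R_comm_sr: "1 \<le> i \<Longrightarrow> i \<le> n - 1 \<Longrightarrow> 1 \<le> j \<Longrightarrow> j \<le> n - 1 \<Longrightarrow> i + 2 \<le> j \<or> j + 2 \<le> i \<Longrightarrow>
   vb_eqv n [s i, r j] [r j, s i]"
  by (rule eqv_rel0) (auto simp: vb_relations_def)
lemma R_mixed: "1 \<le> i \<Longrightarrow> i \<le> n - 2 \<Longrightarrow> vb_eqv n [r i, r (i+1), s i] [s (i+1), r i, r (i+1)]"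
  by (rule eqv_rel0) (auto simp: vb_relations_def)

lemma R_rinv: assumes "1 \<le> k" "k \<le> n - 1" shows "vb_eqv n [(True, Rho k)] [r k]"
proof -
  have "vb_eqv n [(True, Rho k)] [r k, r k, (True, Rho k)]"
    by (rule ctxI[OF vb_eqv.sym[OF R_rr[OF assms]], where u="[]" and v="[(True, Rho k)]"]) (use assms in simp_all)
  also have "vb_eqv n [r k, r k, (True, Rho k)] [r k]"
    by (rule ctxI[OF eqv_cancel0[of "r k" n], where u="[r k]" and v="[]"]) (use assms in simp_all)
  finally show ?thesis by simp
qed

fun isR :: "letter \<Rightarrow> bool" where
  "isR (b, Rho k) = True" | "isR (b, Sig k) = False"

definition rcj :: "nat \<Rightarrow> word \<Rightarrow> word" where "rcj k a = [r k] @ a @ [r k]"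

lemma cj_rcj: assumes "1 \<le> k" "k \<le> n - 1" "a \<in> lists (letters n)"
  shows "vb_eqv n (cj [(b, Rho k)] a) (rcj k a)"
proof (cases b)
  case True
  have "vb_eqv n ([(True, Rho k)] @ (a @ [r k])) ([r k] @ (a @ [r k]))"
    using eqv_app[OF R_rinv[OF assms(1,2)] vb_eqv.refl[of "a @ [r k]"]] assms by simp
  then show ?thesis using True by (simp add: cj_def rcj_def)
next
  case False
  have "vb_eqv n (([r k] @ a) @ [(True, Rho k)]) (([r k] @ a) @ [r k])"
    using eqv_app[OF vb_eqv.refl[of "[r k] @ a"] R_rinv[OF assms(1,2)]] assms by simp
  then show ?thesis using False by (simp add: cj_def rcj_def)
qed



lemma adj_invol2[simp]: "adj i \<circ> (adj i \<circ> f) = f"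
  by (simp add: comp_assoc[symmetric])

lemma Hw_iff: "w \<in> Hw n \<longleftrightarrow> w \<in> lists (letters n) \<and> mu_word w = id"
  by (simp add: Hw_def)

abbreviation AA :: word where "AA \<equiv> [r 1, s 1, r 1]"

lemma Q1:
  assumes ok: "psi_ok n \<Psi>" shows "1 \<le> i \<Longrightarrow> i \<le> n - 1 \<Longrightarrow> sim n \<Psi> [s i] [s 1]"
proof (induction i)
  case 0 then show ?case by simp
next
  case (Suc i)
  show ?case
  proof (cases "i = 0")
    case True then show ?thesis using Suc by (auto intro!: sim_refl simp: Hw_iff)
  next
    case False
    then have h: "sim n \<Psi> [s i] [s 1]" using Suc by auto
    have br: "vb_eqv n [s i, s (Suc i), s i] [s (Suc i), s i, s (Suc i)]"
      using R_braid_s[of i n] Suc.prems False by simp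
    have "sim n \<Psi> [s i] [s (Suc i)]"
      using sim_braid[OF ok, of "[s i]" "[s (Suc i)]"] br Suc.prems False by (simp add: Hw_iff)
    then show ?thesis using h by (meson sim_sym sim_trans)
  qed
qed

lemma F_k1b: "2 \<le> n \<Longrightarrow> vb_eqv n (rcj 1 AA) [s 1]"
proof -
  assume n: "2 \<le> n"
  have "vb_eqv n [r 1, r 1, s 1, r 1, r 1] [s 1, r 1, r 1]"
    by (rule ctxI[OF R_rr[of 1 n], where u="[]" and v="[s 1, r 1, r 1]"]) (use n in auto)
  also have "vb_eqv n [s 1, r 1, r 1] [s 1]"
    by (rule ctxI[OF R_rr[of 1 n], where u="[s 1]" and v="[]"]) (use n in auto)
  finally show ?thesis by (simp add: rcj_def)
qed

lemma F_k3a: "3 \<le> k \<Longrightarrow> k \<le> n - 1 \<Longrightarrow> vb_eqv n (rcj k [s 1]) [s 1]"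
proof -
  assume k: "3 \<le> k" "k \<le> n - 1"
  have "vb_eqv n [r k, s 1, r k] [s 1, r k, r k]"
    by (rule ctxI[OF vb_eqv.sym[OF R_comm_sr[of 1 n k]], where u="[]" and v="[r k]"]) (use k in auto)
  also have "vb_eqv n [s 1, r k, r k] [s 1]"
    by (rule ctxI[OF R_rr[of k n], where u="[s 1]" and v="[]"]) (use k in auto)
  finally show ?thesis by (simp add: rcj_def)
qed

lemma F_k3b: "3 \<le> k \<Longrightarrow> k \<le> n - 1 \<Longrightarrow> vb_eqv n (rcj k AA) AA"
proof -
  assume k: "3 \<le> k" "k \<le> n - 1"
  have "vb_eqv n [r k, r 1, s 1, r 1, r k] [r 1, r k, s 1, r 1, r k]"
    by (rule ctxI[OF R_comm_r[of k n 1], where u="[]" and v="[s 1, r 1, r k]"]) (use k in auto)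
  also have "vb_eqv n [r 1, r k, s 1, r 1, r k] [r 1, s 1, r k, r 1, r k]"
    by (rule ctxI[OF vb_eqv.sym[OF R_comm_sr[of 1 n k]], where u="[r 1]" and v="[r 1, r k]"]) (use k in auto)
  also have "vb_eqv n [r 1, s 1, r k, r 1, r k] [r 1, s 1, r 1, r k, r k]"
    by (rule ctxI[OF R_comm_r[of k n 1], where u="[r 1, s 1]" and v="[r k]"]) (use k in auto)
  also have "vb_eqv n [r 1, s 1, r 1, r k, r k] [r 1, s 1, r 1]"
    by (rule ctxI[OF R_rr[of k n], where u="[r 1, s 1, r 1]" and v="[]"]) (use k in auto)
  finally show ?thesis by (simp add: rcj_def)
qed

lemma F_k2a: "3 \<le> n \<Longrightarrow> vb_eqv n (rcj 2 [s 1]) (rcj 1 [s 2])"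
proof -
  assume n: "3 \<le> n"
  have "vb_eqv n [r 1, s 2, r 1] [r 1, s 2, r 1, r 2, r 2]"
    by (rule ctxI[OF vb_eqv.sym[OF R_rr[of 2 n]], where u="[r 1, s 2, r 1]" and v="[]"]) (use n in auto)
  also have "vb_eqv n [r 1, s 2, r 1, r 2, r 2] [r 1, r 1, r 2, s 1, r 2]"
    by (rule ctxI[OF vb_eqv.sym[OF R_mixed[of 1 n]], where u="[r 1]" and v="[r 2]"]) (use n in auto)
  also have "vb_eqv n [r 1, r 1, r 2, s 1, r 2] [r 2, s 1, r 2]"
    by (rule ctxI[OF R_rr[of 1 n], where u="[]" and v="[r 2, s 1, r 2]"]) (use n in auto)
  finally show ?thesis by (simp add: rcj_def vb_eqv.sym)
qed

lemma F_k2b: "3 \<le> n \<Longrightarrow> vb_eqv n [r 2, r 1, s 2, r 1, r 2] [s 1]"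
proof -
  assume n: "3 \<le> n"
  have "vb_eqv n [r 2, r 1, s 2, r 1, r 2] [r 2, r 1, r 1, r 2, s 1]"
    by (rule ctxI[OF vb_eqv.sym[OF R_mixed[of 1 n]], where u="[r 2, r 1]" and v="[]"]) (use n in auto)
  also have "vb_eqv n [r 2, r 1, r 1, r 2, s 1] [r 2, r 2, s 1]"
    by (rule ctxI[OF R_rr[of 1 n], where u="[r 2]" and v="[r 2, s 1]"]) (use n in auto)
  also have "vb_eqv n [r 2, r 2, s 1] [s 1]"
    by (rule ctxI[OF R_rr[of 2 n], where u="[]" and v="[s 1]"]) (use n in auto)
  finally show ?thesis .
qed

lemma cj21: assumes n: "3 \<le> n" and a: "a \<in> lists (letters n)"
  shows "vb_eqv n (cj [r 2, r 1] a) ([r 2, r 1] @ a @ [r 1, r 2])"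
proof -
  have "vb_eqv n ([r 2, r 1] @ a @ [(True, Rho 1), (True, Rho 2)]) ([r 2, r 1] @ a @ [r 1, (True, Rho 2)])"
    by (rule ctxI[OF R_rinv[of 1 n], where u="[r 2, r 1] @ a" and v="[(True, Rho 2)]"]) (use n a in auto)
  also have "vb_eqv n ([r 2, r 1] @ a @ [r 1, (True, Rho 2)]) ([r 2, r 1] @ a @ [r 1, r 2])"
    by (rule ctxI[OF R_rinv[of 2 n], where u="[r 2, r 1] @ a @ [r 1]" and v="[]"]) (use n a in auto)
  finally show ?thesis by (simp add: cj_def)
qed


lemma rcj_Hw: "1 \<le> k \<Longrightarrow> k \<le> n - 1 \<Longrightarrow> a \<in> Hw n \<Longrightarrow> rcj k a \<in> Hw n"
  by (auto simp: Hw_iff rcj_def)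

lemma s_Hw: "1 \<le> i \<Longrightarrow> i \<le> n - 1 \<Longrightarrow> [s i] \<in> Hw n"
  by (auto simp: Hw_iff)

lemma AA_Hw: "2 \<le> n \<Longrightarrow> AA \<in> Hw n"
  by (auto simp: Hw_iff)

lemma G_s:
  assumes ok: "psi_ok n \<Psi>" and n: "3 \<le> n" and k: "1 \<le> k" "k \<le> n - 1"
  shows "sim n \<Psi> (rcj k [s 1]) [s 1] \<or> sim n \<Psi> (rcj k [s 1]) AA"
proof -
  have L1: "[s 1] \<in> lists (letters n)" "[s 2] \<in> lists (letters n)" using n by auto
  consider "k = 1" | "k = 2" | "3 \<le> k" using k(1) by linarith
  then show ?thesis
  proof cases
    case 1 then show ?thesis using AA_Hw n by (auto simp: rcj_def intro: sim_refl)
  next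
    case 2
    have a: "sim n \<Psi> (rcj 2 [s 1]) (rcj 1 [s 2])"
      by (rule sim_eqv[OF ok rcj_Hw[OF _ _ s_Hw] F_k2a[OF n]]) (use n in auto)
    have b: "sim n \<Psi> (rcj 1 [s 2]) (cj [r 1] [s 2])"
      by (rule sim_eqv[OF ok rcj_Hw[OF _ _ s_Hw] vb_eqv.sym[OF cj_rcj]]) (use n in auto)
    have c: "sim n \<Psi> (cj [r 1] [s 2]) (cj [r 1] [s 1])"
      by (rule sim_cj[OF Q1[OF ok]]) (use n in auto)
    have d: "sim n \<Psi> (cj [r 1] [s 1]) (rcj 1 [s 1])"
      by (rule sim_eqv[OF ok cj_Hw[OF _ s_Hw] cj_rcj]) (use n in auto)
    have "rcj 1 [s 1] = AA" by (simp add: rcj_def)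
    then show ?thesis using sim_trans[OF sim_trans[OF sim_trans[OF a b] c] d] 2 by simp
  next
    case 3
    have "sim n \<Psi> (rcj k [s 1]) [s 1]"
      by (rule sim_eqv[OF ok rcj_Hw[OF k s_Hw[of 1 n]] F_k3a[OF 3 k(2)]]) (use n in auto)
    then show ?thesis ..
  qed
qed

lemma G_A:
  assumes ok: "psi_ok n \<Psi>" and n: "3 \<le> n" and k: "1 \<le> k" "k \<le> n - 1"
  shows "sim n \<Psi> (rcj k AA) [s 1] \<or> sim n \<Psi> (rcj k AA) AA"
proof -
  consider "k = 1" | "k = 2" | "3 \<le> k" using k(1) by linarith
  then show ?thesis
  proof cases
    case 1
    have "sim n \<Psi> (rcj k AA) [s 1]"
      by (rule sim_eqv[OF ok rcj_Hw[OF _ _ AA_Hw]]) (use n 1 F_k1b[of n] in auto)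
    then show ?thesis ..
  next
    case 2
    have e1: "vb_eqv n (cj [r 2, r 1] [s 1]) (rcj 2 AA)"
      using cj21[OF n, of "[s 1]"] n by (simp add: rcj_def)
    have a: "sim n \<Psi> (rcj 2 AA) (cj [r 2, r 1] [s 1])"
      by (rule sim_eqv[OF ok rcj_Hw[OF _ _ AA_Hw] vb_eqv.sym[OF e1]]) (use n in auto)
    have b: "sim n \<Psi> (cj [r 2, r 1] [s 1]) (cj [r 2, r 1] [s 2])"
      by (rule sim_cj[OF sim_sym[OF Q1[OF ok]]]) (use n in auto)
    have e2: "vb_eqv n (cj [r 2, r 1] [s 2]) [s 1]"
    proof -
      have "vb_eqv n (cj [r 2, r 1] [s 2]) [r 2, r 1, s 2, r 1, r 2]"
        using cj21[OF n, of "[s 2]"] n by simp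
      then show ?thesis using F_k2b[OF n] by (rule vb_eqv.trans)
    qed
    have c: "sim n \<Psi> (cj [r 2, r 1] [s 2]) [s 1]"
      by (rule sim_eqv[OF ok cj_Hw[OF _ s_Hw] e2]) (use n in auto)
    show ?thesis using sim_trans[OF sim_trans[OF a b] c] 2 by simp
  next
    case 3
    have "sim n \<Psi> (rcj k AA) AA"
      by (rule sim_eqv[OF ok rcj_Hw[OF k AA_Hw[of n]] F_k3b[OF 3 k(2)]]) (use n in auto)
    then show ?thesis ..
  qed
qed

lemma Q2:
  assumes ok: "psi_ok n \<Psi>" and n: "3 \<le> n" and i: "1 \<le> i" "i \<le> n - 1"
  shows "p \<in> lists (letters n) \<Longrightarrow> \<forall>x\<in>set p. isR x \<Longrightarrow>
     sim n \<Psi> (cj p [s i]) [s 1] \<or> sim n \<Psi> (cj p [s i]) AA"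
proof (induction p)
  case Nil then show ?case using Q1[OF ok i] by simp
next
  case (Cons y p)
  obtain b k where y: "y = (b, Rho k)" using Cons.prems by (cases y, rename_tac b g, case_tac g) auto
  have k: "1 \<le> k" "k \<le> n - 1" using Cons.prems y by auto
  have p: "p \<in> lists (letters n)" using Cons.prems by auto
  have eq: "cj (y # p) [s i] = cj [y] (cj p [s i])" by (simp add: cj_cj)
  have yl: "[y] \<in> lists (letters n)" using k y by simp
  have fin: "sim n \<Psi> (cj [y] X) (rcj k X)" if "X \<in> Hw n" for X
    by (rule sim_eqv[OF ok cj_Hw[OF yl that]]) (use cj_rcj[OF k] that y in \<open>auto simp: Hw_iff\<close>)
  from Cons.IH p Cons.prems have IH: "sim n \<Psi> (cj p [s i]) [s 1] \<or> sim n \<Psi> (cj p [s i]) AA" by auto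
  then show ?case
  proof
    assume h: "sim n \<Psi> (cj p [s i]) [s 1]"
    have h1: "sim n \<Psi> (cj (y # p) [s i]) (cj [y] [s 1])" using sim_cj[OF h yl] eq by simp
    have h2: "sim n \<Psi> (cj [y] [s 1]) (rcj k [s 1])" by (rule fin) (use n in \<open>simp add: Hw_iff\<close>)
    have h3: "sim n \<Psi> (cj (y # p) [s i]) (rcj k [s 1])" by (rule sim_trans[OF h1 h2])
    show ?thesis using G_s[OF ok n k] sim_trans[OF h3] by blast
  next
    assume h: "sim n \<Psi> (cj p [s i]) AA"
    have h1: "sim n \<Psi> (cj (y # p) [s i]) (cj [y] AA)" using sim_cj[OF h yl] eq by simp
    have h2: "sim n \<Psi> (cj [y] AA) (rcj k AA)" by (rule fin) (use n in \<open>simp add: Hw_iff\<close>)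
    have h3: "sim n \<Psi> (cj (y # p) [s i]) (rcj k AA)" by (rule sim_trans[OF h1 h2])
    show ?thesis using G_A[OF ok n k] sim_trans[OF h3] by blast
  qed
qed



lemma upt_split: "i \<le> j \<Longrightarrow> j \<le> k \<Longrightarrow> [i..<k] = [i..<j] @ [j..<k]"
  using upt_add_eq_append[of i j "k - j"] by simp

lemma CL:
  assumes j: "1 \<le> j" "j \<le> n - 1"
  shows "\<forall>l\<in>set ls. 1 \<le> l \<and> l \<le> n - 1 \<and> (l + 2 \<le> j \<or> j + 2 \<le> l) \<Longrightarrow>
    vb_eqv n (map r ls @ [r j]) ([r j] @ map r ls)"
proof (induction ls)
  case Nil then show ?case using j vb_eqv.refl[of "[r j]" n] by simp
next
  case (Cons l ls)
  have L: "map r ls \<in> lists (letters n)" using Cons.prems by auto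
  have "vb_eqv n (r l # map r ls @ [r j]) (r l # r j # map r ls)"
    by (rule ctxI[OF Cons.IH, where u="[r l]" and v="[]"]) (use Cons.prems in auto)
  also have "vb_eqv n (r l # r j # map r ls) (r j # r l # map r ls)"
    by (rule ctxI[OF R_comm_r, where u="[]" and v="map r ls"]) (use Cons.prems j L in auto)
  finally show ?case by simp
qed

lemma mu_R_fix: "\<forall>j\<in>set js. Suc j < m \<Longrightarrow> mu_word (map r js) m = m"
  by (induction js) auto

lemma mu_D: "k \<le> m \<Longrightarrow> mu_word (map r (rev [k..<m])) k = m"
proof (induction m)
  case 0 then show ?case by simp
next
  case (Suc m)
  show ?case
  proof (cases "k = Suc m")
    case True then show ?thesis by simp
  next
    case False
    then have "k \<le> m" using Suc.prems by simp
    then show ?thesis using Suc.IH by (simp add: upt_Suc_append)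
  qed
qed

lemma NF:
  assumes mn: "m \<le> n" and m1: "1 \<le> m"
  shows "\<forall>j\<in>set js. 1 \<le> j \<and> j < m \<Longrightarrow>
    \<exists>js' k. (\<forall>j\<in>set js'. 1 \<le> j \<and> Suc j < m) \<and> 1 \<le> k \<and> k \<le> m \<and>
       vb_eqv n (map r js) (map r js' @ map r (rev [k..<m]))"
proof (induction js rule: rev_induct)
  case Nil
  show ?case by (rule exI[of _ "[]"], rule exI[of _ m]) (use m1 vb_eqv.refl[of "[]" n] in simp)
next
  case (snoc j js)
  from snoc.prems have jr: "1 \<le> j" "j < m" by auto
  from snoc.IH snoc.prems obtain js' k where
    js': "\<forall>j\<in>set js'. 1 \<le> j \<and> Suc j < m" and k: "1 \<le> k" "k \<le> m"
    and E: "vb_eqv n (map r js) (map r js' @ map r (rev [k..<m]))" by auto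
  have "\<forall>j\<in>set js'. 1 \<le> j \<and> j \<le> n - 1"
  proof
    fix j assume "j \<in> set js'"
    then have "1 \<le> j" "Suc j < m" using js' by auto
    then show "1 \<le> j \<and> j \<le> n - 1" using mn by linarith
  qed
  then have Ljs': "map r js' \<in> lists (letters n)" by auto
  have LD: "map r (rev [a..<m]) \<in> lists (letters n)" if "1 \<le> a" for a using that mn by (clarsimp; linarith)
  have E1: "vb_eqv n (map r (js @ [j])) (map r js' @ map r (rev [k..<m]) @ [r j])"
    using eqv_app[OF E vb_eqv.refl[of "[r j]" n]] jr mn by simp
  consider "j + 2 \<le> k" | "j + 1 = k" | "j = k" | "k < j" by linarith
  then show ?case
  proof cases
    case 1
    have j1: "j \<le> n - 1" using jr mn by linarith
    have cond: "\<forall>l\<in>set (rev [k..<m]). 1 \<le> l \<and> l \<le> n - 1 \<and> (l + 2 \<le> j \<or> j + 2 \<le> l)"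
    proof
      fix l assume "l \<in> set (rev [k..<m])"
      then have "k \<le> l" "l < m" by auto
      then show "1 \<le> l \<and> l \<le> n - 1 \<and> (l + 2 \<le> j \<or> j + 2 \<le> l)" using k 1 mn by arith
    qed
    have "vb_eqv n (map r js' @ map r (rev [k..<m]) @ [r j]) (map r js' @ ([r j] @ map r (rev [k..<m])) @ [])"
      using ctx[OF CL[OF jr(1) j1 cond], of "map r js'" "[]"] Ljs' by simp
    then have "vb_eqv n (map r (js @ [j])) (map r (js' @ [j]) @ map r (rev [k..<m]))"
      using E1 vb_eqv.trans by fastforce
    then show ?thesis using js' jr k 1 by (intro exI[of _ "js' @ [j]"] exI[of _ k]) auto
  next
    case 2
    have "rev [j..<m] = rev [k..<m] @ [j]" using 2 k by (simp add: upt_conv_Cons)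
    then show ?thesis using E1 js' jr 2 by (intro exI[of _ js'] exI[of _ j]) auto
  next
    case 3
    have km: "k < m" using 3 jr by simp
    have D: "rev [k..<m] = rev [Suc k..<m] @ [k]" using km by (simp add: upt_conv_Cons)
    have "vb_eqv n (map r js' @ map r (rev [Suc k..<m]) @ [r k, r k] @ []) (map r js' @ map r (rev [Suc k..<m]) @ [] @ [])"
      using ctx[OF R_rr[of k n], of "map r js' @ map r (rev [Suc k..<m])" "[]"] k km mn Ljs' LD[of "Suc k"] by simp
    then have "vb_eqv n (map r (js @ [j])) (map r js' @ map r (rev [Suc k..<m]))"
      using E1 3 D vb_eqv.trans by fastforce
    then show ?thesis using js' km k by (intro exI[of _ js'] exI[of _ "Suc k"]) auto
  next
    case 4
    define i where "i = j - 1"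
    have ij: "j = Suc i" "k \<le> i" "1 \<le> i" using 4 k unfolding i_def by auto
    have im: "Suc i < m" "i \<le> n - 2" "Suc i \<le> n - 1" using jr mn ij by linarith+
    have split: "rev [k..<m] = rev [Suc j..<m] @ [j, i] @ rev [k..<i]"
    proof -
      have "[k..<m] = [k..<i] @ [i..<m]" using ij im by (intro upt_split) auto
      also have "[i..<m] = i # j # [Suc j..<m]" using ij im by (simp add: upt_conv_Cons)
      finally show ?thesis by simp
    qed
    define P where "P = map r (rev [Suc j..<m])"
    define T where "T = map r (rev [k..<i])"
    have LP: "P \<in> lists (letters n)" unfolding P_def using mn by (clarsimp; linarith)
    have LT: "T \<in> lists (letters n)" unfolding T_def using mn ij im k by (clarsimp; linarith)
    have condT: "\<forall>l\<in>set (rev [k..<i]). 1 \<le> l \<and> l \<le> n - 1 \<and> (l + 2 \<le> j \<or> j + 2 \<le> l)"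
    proof
      fix l assume "l \<in> set (rev [k..<i])"
      then have "k \<le> l" "l < i" by auto
      then show "1 \<le> l \<and> l \<le> n - 1 \<and> (l + 2 \<le> j \<or> j + 2 \<le> l)" using k ij im by arith
    qed
    have condP: "\<forall>l\<in>set (rev [Suc j..<m]). 1 \<le> l \<and> l \<le> n - 1 \<and> (l + 2 \<le> i \<or> i + 2 \<le> l)"
    proof
      fix l assume "l \<in> set (rev [Suc j..<m])"
      then have "Suc j \<le> l" "l < m" by auto
      then show "1 \<le> l \<and> l \<le> n - 1 \<and> (l + 2 \<le> i \<or> i + 2 \<le> l)" using ij mn by arith
    qed
    have j1: "1 \<le> j" "j \<le> n - 1" using ij im by auto
    have i1: "1 \<le> i" "i \<le> n - 1" using ij im by auto
    have "vb_eqv n (map r js' @ P @ [r j, r i] @ T @ [r j]) (map r js' @ P @ [r j, r i] @ [r j] @ T)"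
      by (rule ctxI[OF CL[OF j1 condT], where u="map r js' @ P @ [r j, r i]" and v="[]"])
         (use Ljs' LP j1 i1 in \<open>auto simp: T_def\<close>)
    also have "vb_eqv n (map r js' @ P @ [r j, r i] @ [r j] @ T) (map r js' @ P @ [r i, r j, r i] @ T)"
      by (rule ctxI[OF vb_eqv.sym[OF R_braid_r[of i n]], where u="map r js' @ P" and v="T"])
         (use Ljs' LP LT ij im in auto)
    also have "vb_eqv n (map r js' @ P @ [r i, r j, r i] @ T) (map r js' @ [r i] @ P @ [r j, r i] @ T)"
      by (rule ctxI[OF CL[OF i1 condP], where u="map r js'" and v="[r j, r i] @ T"])
         (use Ljs' LT j1 i1 in \<open>auto simp: P_def\<close>)
    finally have "vb_eqv n (map r js' @ map r (rev [k..<m]) @ [r j]) (map r (js' @ [i]) @ map r (rev [k..<m]))"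
      by (simp add: split P_def T_def)
    then have "vb_eqv n (map r (js @ [j])) (map r (js' @ [i]) @ map r (rev [k..<m]))"
      using E1 vb_eqv.trans by blast
    then show ?thesis using js' ij im k by (intro exI[of _ "js' @ [i]"] exI[of _ k]) auto
  qed
qed


lemma Cox_idx:
  "m \<le> n \<Longrightarrow> \<forall>j\<in>set js. 1 \<le> j \<and> j < m \<Longrightarrow> mu_word (map r js) = id \<Longrightarrow>
    vb_eqv n (map r js) []"
proof (induction m arbitrary: js)
  case 0
  then have "js = []" by (cases js) auto
  then show ?case using vb_eqv.refl[of "[]" n] by simp
next
  case (Suc m)
  obtain js' k where js': "\<forall>j\<in>set js'. 1 \<le> j \<and> Suc j < Suc m" and k: "1 \<le> k" "k \<le> Suc m"
    and E: "vb_eqv n (map r js) (map r js' @ map r (rev [k..<Suc m]))"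
    using NF[OF Suc.prems(1), of js] Suc.prems(2) by auto
  have mu: "mu_word (map r js) = mu_word (map r js') \<circ> mu_word (map r (rev [k..<Suc m]))"
    using eqv_invariants[OF E] by simp
  have fx: "\<forall>j\<in>set js'. Suc j < Suc m" using js' by auto
  have "mu_word (map r js) k = Suc m"
    using mu mu_D[OF k(2)] mu_R_fix[OF fx] by simp
  then have kk: "k = Suc m" using Suc.prems(3) by simp
  then have E': "vb_eqv n (map r js) (map r js')" using E by simp
  have m1: "mu_word (map r js') = id" using eqv_invariants[OF E'] Suc.prems(3) by metis
  have m2: "\<forall>j\<in>set js'. 1 \<le> j \<and> j < m" using js' by auto
  have m3: "m \<le> n" using Suc.prems(1) by simp
  have "vb_eqv n (map r js') []" by (rule Suc.IH[OF m3 m2 m1])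
  then show ?case using E' vb_eqv.trans by blast
qed

lemma rho_word_norm:
  "p \<in> lists (letters n) \<Longrightarrow> \<forall>x\<in>set p. isR x \<Longrightarrow>
    vb_eqv n p (map r (map (\<lambda>x. gidx (snd x)) p))"
proof (induction p)
  case Nil then show ?case using vb_eqv.refl[of "[]" n] by simp
next
  case (Cons y p)
  obtain b k where y: "y = (b, Rho k)" using Cons.prems by (cases y, rename_tac b g, case_tac g) auto
  have k: "1 \<le> k" "k \<le> n - 1" using Cons.prems y by auto
  have "vb_eqv n [y] [r k]"
    using R_rinv[OF k] vb_eqv.refl[of "[r k]" n] k y by (cases b) auto
  from eqv_app[OF this Cons.IH] Cons.prems y show ?case by simp
qed

lemma Coxeter:
  assumes "p \<in> lists (letters n)" "\<forall>x\<in>set p. isR x" "mu_word p = id"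
  shows "vb_eqv n p []"
proof -
  let ?js = "map (\<lambda>x. gidx (snd x)) p"
  have E: "vb_eqv n p (map r ?js)" by (rule rho_word_norm[OF assms(1,2)])
  have "mu_word (map r ?js) = id" using eqv_invariants[OF E] assms(3) by metis
  moreover have "\<forall>j\<in>set ?js. 1 \<le> j \<and> j < n" using assms(1)
    by (fastforce simp: letters_def)
  ultimately have "vb_eqv n (map r ?js) []" using Cox_idx[of n n ?js] by simp
  then show ?thesis using E vb_eqv.trans by blast
qed



lemma mu_rf: "mu_word (filter isR w) = mu_word w"
  by (induction w) (auto elim!: isR.elims)

lemma isR_linv[simp]: "isR (linv x) = isR x"
  by (cases x, rename_tac b g, case_tac g) auto

lemma rf_lists: "w \<in> lists (letters n) \<Longrightarrow> filter isR w \<in> lists (letters n)" by auto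

lemma decomp_Hw: "w \<in> lists (letters n) \<Longrightarrow> w @ winv (filter isR w) \<in> Hw n"
  using mu_winv[OF rf_lists[of w n]] by (auto simp: Hw_iff mu_rf)

definition inS :: "(nat \<times> nat \<Rightarrow> bool) \<Rightarrow> (nat \<times> nat \<Rightarrow> bool) \<Rightarrow> (nat \<times> nat \<Rightarrow> bool) \<Rightarrow> bool" where
  "inS V1 V2 v \<longleftrightarrow> (\<exists>a b. v = (\<lambda>p. (a \<and> V1 p) \<noteq> (b \<and> V2 p)))"

lemma inS_0: "inS V1 V2 (\<lambda>p. False)"
  unfolding inS_def by (rule exI[of _ False], rule exI[of _ False]) simp

lemma inS_1: "inS V1 V2 v \<Longrightarrow> inS V1 V2 (\<lambda>p. v p \<noteq> V1 p)"
  unfolding inS_def by (elim exE, rename_tac a b, rule_tac x="\<not> a" in exI, rule_tac x=b in exI) auto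

lemma inS_2: "inS V1 V2 v \<Longrightarrow> inS V1 V2 (\<lambda>p. v p \<noteq> V2 p)"
  unfolding inS_def by (elim exE, rename_tac a b, rule_tac x="a" in exI, rule_tac x="\<not> b" in exI) auto

lemma inv_sig:
  assumes ok: "psi_ok n \<Psi>" and i: "1 \<le> i" "i \<le> n - 1" and p: "p \<in> lists (letters n)"
  shows "\<Psi> (cj p [(True, Sig i)]) = \<Psi> (cj p [s i])"
proof -
  have h1: "[s i] \<in> Hw n" "[(True, Sig i)] \<in> Hw n" using i by (auto simp: Hw_iff)
  have a: "cj p [s i] \<in> Hw n" "cj p [(True, Sig i)] \<in> Hw n" using cj_Hw[OF p] h1 by auto
  have "vb_eqv n (cj p [s i] @ cj p [(True, Sig i)]) (cj p ([s i] @ [(True, Sig i)]))"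
    by (rule cj_app) (use p i in auto)
  also have "vb_eqv n (cj p ([s i] @ [(True, Sig i)])) (cj p [])"
    using eqv_cj[OF eqv_cancel0[of "s i" n] p] i by simp
  also have "vb_eqv n (cj p []) []" using w_winv[OF p] by (simp add: cj_def)
  finally have "\<Psi> (cj p [s i] @ cj p [(True, Sig i)]) = \<Psi> []"
    using psi_resp[OF ok] a Hw_app by blast
  then show ?thesis using psi_add[OF ok a(1) a(2)] psi_nil[OF ok] by (auto simp: fun_eq_iff)
qed

lemma decomp:
  assumes ok: "psi_ok n \<Psi>" and n: "3 \<le> n"
  shows "w \<in> lists (letters n) \<Longrightarrow> inS (\<Psi> [s 1]) (\<Psi> AA) (\<Psi> (w @ winv (filter isR w)))"
proof (induction w rule: rev_induct)
  case Nil then show ?case using psi_nil[OF ok] inS_0 by simp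
next
  case (snoc x w)
  have w: "w \<in> lists (letters n)" and x: "x \<in> letters n" using snoc.prems by auto
  define p where "p = filter isR w"
  have pl: "p \<in> lists (letters n)" "\<forall>y\<in>set p. isR y" using w by (auto simp: p_def)
  have IH: "inS (\<Psi> [s 1]) (\<Psi> AA) (\<Psi> (w @ winv p))" using snoc.IH w by (simp add: p_def)
  have H0: "w @ winv p \<in> Hw n" using decomp_Hw[OF w] by (simp add: p_def)
  have H1: "(w @ [x]) @ winv (filter isR (w @ [x])) \<in> Hw n" using decomp_Hw[OF snoc.prems] .
  show ?case
  proof (cases "isR x")
    case True
    have e: "(w @ [x]) @ winv (filter isR (w @ [x])) = w @ [x, linv x] @ winv p"
      using True by (simp add: p_def)
    have "vb_eqv n (w @ [x, linv x] @ winv p) (w @ winv p)"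
      by (rule vb_eqv.cancel) (use w x pl in auto)
    then have "\<Psi> ((w @ [x]) @ winv (filter isR (w @ [x]))) = \<Psi> (w @ winv p)"
      using psi_resp[OF ok H1] e by simp
    then show ?thesis using IH by simp
  next
    case False
    then obtain b i where xb: "x = (b, Sig i)" by (cases x, rename_tac b g, case_tac g) auto
    have i: "1 \<le> i" "i \<le> n - 1" using x xb by auto
    have e: "(w @ [x]) @ winv (filter isR (w @ [x])) = w @ [x] @ winv p"
      using False by (simp add: p_def)
    have xH: "[x] \<in> Hw n" using x xb by (auto simp: Hw_iff)
    have cH: "cj p [x] \<in> Hw n" using cj_Hw[OF pl(1) xH] .
    have "vb_eqv n (w @ (winv p @ p) @ ([x] @ winv p)) (w @ [] @ ([x] @ winv p))"
      by (rule ctx[OF winv_w[OF pl(1)]]) (use w x pl in auto)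
    then have "vb_eqv n ((w @ winv p) @ cj p [x]) (w @ [x] @ winv p)"
      by (simp add: cj_def)
    then have "\<Psi> ((w @ winv p) @ cj p [x]) = \<Psi> (w @ [x] @ winv p)"
      using psi_resp[OF ok Hw_app[OF H0 cH]] by simp
    then have E: "\<Psi> (w @ [x] @ winv p) = (\<lambda>q. \<Psi> (w @ winv p) q \<noteq> \<Psi> (cj p [x]) q)"
      using psi_add[OF ok H0 cH] by simp
    have cx: "\<Psi> (cj p [x]) = \<Psi> (cj p [s i])"
      using inv_sig[OF ok i pl(1)] xb by (cases b) auto
    have "sim n \<Psi> (cj p [s i]) [s 1] \<or> sim n \<Psi> (cj p [s i]) AA"
      using Q2[OF ok n i pl] .
    then have "\<Psi> (cj p [x]) = \<Psi> [s 1] \<or> \<Psi> (cj p [x]) = \<Psi> AA"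
      using cx sim_psi[of n \<Psi> "cj p [s i]" "[s 1]"] sim_psi[of n \<Psi> "cj p [s i]" AA] by auto
    then have "inS (\<Psi> [s 1]) (\<Psi> AA) (\<Psi> (w @ [x] @ winv p))"
      by (elim disjE) (simp_all only: E inS_1[OF IH] inS_2[OF IH])
    then show ?thesis using e by simp
  qed
qed

lemma Hw_inS:
  assumes ok: "psi_ok n \<Psi>" and n: "3 \<le> n" and w: "w \<in> Hw n"
  shows "inS (\<Psi> [s 1]) (\<Psi> AA) (\<Psi> w)"
proof -
  have wl: "w \<in> lists (letters n)" and mw: "mu_word w = id" using w by (auto simp: Hw_iff)
  let ?q = "winv (filter isR w)"
  have "mu_word (filter isR w) \<circ> mu_word ?q = id" using mu_winv[OF rf_lists[OF wl]] .
  then have mq: "mu_word ?q = id" using mu_rf[of w] mw by simp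
  have l1: "?q \<in> lists (letters n)" using rf_lists[OF wl] by simp
  have l2: "\<forall>x\<in>set ?q. isR x" by (auto simp: winv_def)
  have "vb_eqv n ?q []" by (rule Coxeter[OF l1 l2 mq])
  then have "vb_eqv n (w @ ?q) (w @ [])" using eqv_app[OF vb_eqv.refl[OF wl]] by blast
  then have "\<Psi> (w @ ?q) = \<Psi> w" using psi_resp[OF ok decomp_Hw[OF wl]] by simp
  then show ?thesis using decomp[OF ok n wl] by simp
qed



lemma dneq: "a \<noteq> b \<Longrightarrow> (\<lambda>p::nat \<times> nat. p = a) \<noteq> (\<lambda>p. p = b)"
  by (metis)
lemma fneq1: "(\<lambda>p::nat \<times> nat. False) \<noteq> (\<lambda>p. p = a)"
  by (metis)
lemma fneq2: "(\<lambda>p::nat \<times> nat. p = a) \<noteq> (\<lambda>p. False)"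
  by (metis)

lemma five_false:
  assumes d: "distinct [a0, a1, a2, a3, a4]"
    and h: "inS V1 V2 a0" "inS V1 V2 a1" "inS V1 V2 a2" "inS V1 V2 a3" "inS V1 V2 a4"
  shows False
proof -
  define f where "f = (\<lambda>a b. (\<lambda>p. (a \<and> V1 p) \<noteq> (b \<and> V2 p)))"
  have sub: "v \<in> set [f False False, f False True, f True False, f True True]" if "inS V1 V2 v" for v
  proof -
    from that obtain a b where "v = f a b" unfolding inS_def f_def by blast
    then show ?thesis by (cases a; cases b) auto
  qed
  have "set [a0, a1, a2, a3, a4] \<subseteq> set [f False False, f False True, f True False, f True True]"
    using sub h by auto
  then have "card (set [a0, a1, a2, a3, a4]) \<le> card (set [f False False, f False True, f True False, f True True])"
    by (intro card_mono) auto
  also have "\<dots> \<le> 4" using card_length[of "[f False False, f False True, f True False, f True True]"] by simp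
  finally show False using distinct_card[OF d] by simp
qed

lemma cc_vals:
  "cc id [] = (\<lambda>p. False)"
  "cc id [s 1, r 1] = (\<lambda>p. p = (1, 2))"
  "cc id [r 1, s 1] = (\<lambda>p. p = (2, 1))"
  "cc id [r 2, s 1, r 1, r 2] = (\<lambda>p. p = (1, 3))"
  "cc id [r 2, r 1, s 1, r 1, r 1, r 2] = (\<lambda>p. p = (3, 1))"
  by (auto simp: adj_def fun_eq_iff)

lemma nu_vals:
  "nu_word [s 1, r 1] = id"
  "nu_word [r 1, s 1] = id"
  "nu_word [r 2, s 1, r 1, r 2] = id"
  "nu_word [r 2, r 1, s 1, r 1, r 1, r 2] = id"
  by (simp_all add: comp_assoc[symmetric])

theorem proposition7p1:
  fixes n :: nat
  assumes "n \<ge> 3"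
  shows "\<not> ((VB n)\<lparr>carrier := H n\<rparr> \<cong> (VB n)\<lparr>carrier := VP n\<rparr>)"
proof
  have n: "3 \<le> n" using assms by simp
  assume "(VB n)\<lparr>carrier := H n\<rparr> \<cong> (VB n)\<lparr>carrier := VP n\<rparr>"
  then obtain \<phi> where \<phi>: "\<phi> \<in> iso ((VB n)\<lparr>carrier := H n\<rparr>) ((VB n)\<lparr>carrier := VP n\<rparr>)"
    unfolding is_iso_def by blast
  then have hom: "\<phi> \<in> hom ((VB n)\<lparr>carrier := H n\<rparr>) ((VB n)\<lparr>carrier := VP n\<rparr>)"
    and bij: "bij_betw \<phi> (H n) (VP n)" by (auto simp: iso_def)
  have mapH: "\<phi> X \<in> VP n" if "X \<in> H n" for X using hom that by (auto simp: hom_def)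
  have mul: "\<phi> (X \<otimes>\<^bsub>VB n\<^esub> Y) = \<phi> X \<otimes>\<^bsub>VB n\<^esub> \<phi> Y" if "X \<in> H n" "Y \<in> H n" for X Y
    using hom that by (auto simp: hom_def)
  define \<Psi> where "\<Psi> w = CC (\<phi> (cls n w))" for w
  have ok: "psi_ok n \<Psi>"
    unfolding psi_ok_def
  proof (intro conjI ballI allI impI)
    fix u v assume u: "u \<in> Hw n" and v: "v \<in> Hw n"
    have ul: "u \<in> lists (letters n)" and vl: "v \<in> lists (letters n)" using u v by (auto simp: Hw_iff)
    have uH: "cls n u \<in> H n" and vH: "cls n v \<in> H n" using u v H_cls by (auto simp: Hw_iff)
    obtain u' where u': "u' \<in> lists (letters n)" "\<phi> (cls n u) = cls n u'" "nu_word u' = id"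
      using VP_elem[OF mapH[OF uH]] by blast
    obtain v' where v': "v' \<in> lists (letters n)" "\<phi> (cls n v) = cls n v'" "nu_word v' = id"
      using VP_elem[OF mapH[OF vH]] by blast
    have "\<phi> (cls n (u @ v)) = \<phi> (cls n u) \<otimes>\<^bsub>VB n\<^esub> \<phi> (cls n v)"
      using mult_cls[OF ul vl] mul[OF uH vH] by simp
    also have "\<dots> = cls n (u' @ v')" using u' v' mult_cls by simp
    finally have "\<Psi> (u @ v) = cc id (u' @ v')" using CC_cls u' v' by (simp add: \<Psi>_def)
    also have "\<dots> = (\<lambda>p. cc id u' p \<noteq> cc id v' p)" using cc_hom[OF u'(3)] .
    finally show "\<Psi> (u @ v) = (\<lambda>p. \<Psi> u p \<noteq> \<Psi> v p)"
      using u' v' CC_cls by (simp add: \<Psi>_def)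
  next
    fix u v assume u: "u \<in> Hw n" and e: "vb_eqv n u v"
    have "cls n u = cls n v" using cls_eq_iff e u by (auto simp: Hw_iff)
    then show "\<Psi> u = \<Psi> v" by (simp add: \<Psi>_def)
  qed
  have key: "inS (\<Psi> [s 1]) (\<Psi> AA) (cc id e)" if e: "e \<in> lists (letters n)" "nu_word e = id" for e
  proof -
    have "cls n e \<in> VP n" using VP_cls e by simp
    then have "cls n e \<in> \<phi> ` H n" using bij by (simp add: bij_betw_def)
    then obtain X where X: "X \<in> H n" "\<phi> X = cls n e" by (elim imageE) simp
    obtain w where w: "w \<in> lists (letters n)" "X = cls n w" "mu_word w = id" using H_elem[OF X(1)] by blast
    have wH: "w \<in> Hw n" using w by (simp add: Hw_iff)
    have "\<Psi> w = cc id e" using X w CC_cls[OF e(1)] by (simp add: \<Psi>_def)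
    then show ?thesis using Hw_inS[OF ok n wH] by simp
  qed
  have L: "[s 1, r 1] \<in> lists (letters n)" "[r 1, s 1] \<in> lists (letters n)"
    "[r 2, s 1, r 1, r 2] \<in> lists (letters n)" "[r 2, r 1, s 1, r 1, r 1, r 2] \<in> lists (letters n)"
    "([] :: word) \<in> lists (letters n)"
    using n by auto
  have k0: "inS (\<Psi> [s 1]) (\<Psi> AA) (\<lambda>p. False)" using key[OF L(5)] cc_vals by simp
  have k1: "inS (\<Psi> [s 1]) (\<Psi> AA) (\<lambda>p. p = (1, 2))" using key[OF L(1) nu_vals(1)] cc_vals by simp
  have k2: "inS (\<Psi> [s 1]) (\<Psi> AA) (\<lambda>p. p = (2, 1))" using key[OF L(2) nu_vals(2)] cc_vals by simp
  have k3: "inS (\<Psi> [s 1]) (\<Psi> AA) (\<lambda>p. p = (1, 3))" using key[OF L(3) nu_vals(3)] cc_vals by simp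
  have k4: "inS (\<Psi> [s 1]) (\<Psi> AA) (\<lambda>p. p = (3, 1))" using key[OF L(4) nu_vals(4)] cc_vals by simp
  have d: "distinct [(\<lambda>p::nat \<times> nat. False), (\<lambda>p. p = (1, 2)), (\<lambda>p. p = (2, 1)), (\<lambda>p. p = (1, 3)), (\<lambda>p. p = (3, 1))]"
    by (simp add: dneq fneq1)
  show False by (rule five_false[OF d k0 k1 k2 k3 k4])
qed


end
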